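(* Let $\Gamma$ be a gain operator on $\ell^\infty_+(\mathcal I)$ and suppose there is a path $\sigma:\mathbb R_+\to\ell^\infty_+(\mathcal I)$ that is continuous (in norm) and satisfies: (i) there is $\tilde\rho\in\mathcal K_\infty$ with $\Gamma_{\tilde\rho}(\sigma(r))\le\sigma(r)$ for all $r\ge0$; (ii) there are $\varphi_{\min},\varphi_{\max}\in\mathcal K_\infty$ with $\varphi_{\min}(r)\mathbf 1\le\sigma(r)\le\varphi_{\max}(r)\mathbf 1$ for all $r\ge0$ ($\sigma$ need not be increasing; in particular this holds if $\Gamma$ admits a $C^0$-path of strict decay). Then there is $\rho\in\mathcal K_\infty$ such that (a) $\Sigma(\Gamma_\rho)$ is UGAS, and (b) $\Gamma_\rho$ satisfies the $\oplus$-MBI property.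
   Context: Let $\mathcal I$ be a nonempty countable index set; $\ell^\infty_+(\mathcal I)$ is the cone of nonnegative real families $s=(s_i)_{i\in\mathcal I}$ with $\|s\|:=\sup_i|s_i|<\infty$, ordered componentwise; $\mathbf 1$ is the all-ones vector; $\oplus$ is the componentwise maximum. $\mathcal K$: continuous strictly increasing $\gamma:\mathbb R_+\to\mathbb R_+$ with $\gamma(0)=0$; $\mathcal K_\infty$: unbounded elements of $\mathcal K$, acting on $\ell^\infty_+(\mathcal I)$ componentwise; $\mathcal{KL}$: continuous $\beta:\mathbb R_+^2\to\mathbb R_+$ with $\beta(\cdot,t)\in\mathcal K$ and $\beta(r,\cdot)$ continuous strictly decreasing to $0$ for $r>0$. For $\mathcal J\subset\mathcal I$, $s_{|\mathcal J}$ agrees with $s$ on $\mathcal J$ and is $0$ elsewhere. Gain operator: for each $i$ a finite (possibly empty) $\mathcal I_i\subset\mathcal I\setminus\{i\}$; directed graph $\mathcal G$ with vertices $\mathcal I$ and edges $ji$, $j\in\mathcal I_i$; a pointwise equicontinuous family $\gamma_{ij}\in\mathcal K_\infty$ ($ji\in E(\mathcal G)$); functions $\mu_i:\ell^\infty_+(\mathcal I)\to[0,\infty]$ with (M1) some $\xi\in\mathcal K_\infty$ has $\mu_i(0)=0$, $\mu_i(s)\ge\xi(\|s\|)$; (M2) $\mu_i$ monotone; (M3) for each finite $\mathcal J$, $\mu_i$ restricted to vectors vanishing off $\mathcal J$ is finite-valued and continuous; (M4) for each norm-bounded $A$ and $\varepsilon>0$ there is $\delta>0$ with $\sup_i|\mu_i(s_{|\mathcal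 I_i})-\mu_i(s^0_{|\mathcal I_i})|\le\varepsilon$ whenever $s^0\in A$, $\|s-s^0\|\le\delta$. $\Gamma_i(s):=\mu_i([\gamma_{ij}(s_j)]_{j\in\mathcal I_i})$ (argument zero outside $\mathcal I_i$). $\Gamma_\rho:=(\mathrm{id}+\rho)\circ\Gamma$. A $C^0$-path of strict decay is a path $\sigma$ satisfying (i), (ii) above, being increasing ($r_1\le r_2\Rightarrow\sigma(r_1)\le\sigma(r_2)$) and norm-continuous. $\Sigma(T)$ is the system $s^{n+1}=T(s^n)$; it is UGAS if $\|T^n(s)\|\le\beta(\|s\|,n)$ for some $\beta\in\mathcal{KL}$ and all $s,n$. A monotone $T$ has the $\oplus$-MBI property if there is $\varphi\in\mathcal K_\infty$ such that for all $s,b$, $s\le b\oplus T(s)$ implies $\|s\|\le\varphi(\|b\|)$. *)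

theory Defs
  imports "HOL-Analysis.Analysis" "HOL-Library.Countable"
begin

definition linf :: "('i \<Rightarrow> real) \<Rightarrow> bool" where
  "linf s \<longleftrightarrow> (\<forall>i. 0 \<le> s i) \<and> bdd_above (range (\<lambda>i. \<bar>s i\<bar>))"

definition nrm :: "('i \<Rightarrow> real) \<Rightarrow> real" where
  "nrm s = (SUP i. \<bar>s i\<bar>)"

definition classK :: "(real \<Rightarrow> real) \<Rightarrow> bool" where
  "classK g \<longleftrightarrow> continuous_on {0..} g \<and> strict_mono_on {0..} g \<and> g 0 = 0"

definition classKinf :: "(real \<Rightarrow> real) \<Rightarrow> bool" where
  "classKinf g \<longleftrightarrow> classK g \<and> (\<forall>M. \<exists>r\<ge>0. M < g r)"

definition classKL :: "(real \<Rightarrow> real \<Rightarrow> real) \<Rightarrow> bool" where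
  "classKL \<beta> \<longleftrightarrow> continuous_on ({0..} \<times> {0..}) (\<lambda>(r, t). \<beta> r t)
     \<and> (\<forall>t\<ge>0. classK (\<lambda>r. \<beta> r t))
     \<and> (\<forall>r>0. continuous_on {0..} (\<beta> r)
              \<and> (\<forall>t1 t2. 0 \<le> t1 \<longrightarrow> t1 < t2 \<longrightarrow> \<beta> r t2 < \<beta> r t1)
              \<and> ((\<beta> r) \<longlongrightarrow> 0) at_top)"

definition restr :: "('i \<Rightarrow> real) \<Rightarrow> 'i set \<Rightarrow> ('i \<Rightarrow> real)" where
  "restr s J = (\<lambda>i. if i \<in> J then s i else 0)"

text \<open>Gain operator data: Isub i = the finite in-neighbour set of i, gam i j = gamma_ij,
  mu i = mu_i (values in [0,infinity], modelled as ereal).\<close>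
definition gain_operator ::
  "('i \<Rightarrow> 'i set) \<Rightarrow> ('i \<Rightarrow> 'i \<Rightarrow> real \<Rightarrow> real) \<Rightarrow> ('i \<Rightarrow> ('i \<Rightarrow> real) \<Rightarrow> ereal) \<Rightarrow> bool" where
  "gain_operator Isub gam mu \<longleftrightarrow>
     (\<forall>i. finite (Isub i) \<and> i \<notin> Isub i)
   \<and> (\<forall>i. \<forall>j\<in>Isub i. classKinf (gam i j))
   \<and> (\<forall>r\<ge>0. \<forall>\<epsilon>>0. \<exists>\<delta>>0. \<forall>i. \<forall>j\<in>Isub i. \<forall>r'\<ge>0.
         \<bar>r' - r\<bar> < \<delta> \<longrightarrow> \<bar>gam i j r' - gam i j r\<bar> < \<epsilon>)
   \<and> (\<forall>i s. linf s \<longrightarrow> 0 \<le> mu i s)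
   \<and> (\<exists>\<xi>. classKinf \<xi> \<and> (\<forall>i. mu i (\<lambda>_. 0) = 0 \<and>
           (\<forall>s. linf s \<longrightarrow> ereal (\<xi> (nrm s)) \<le> mu i s)))
   \<and> (\<forall>i s s'. linf s \<and> linf s' \<and> (\<forall>j. s j \<le> s' j) \<longrightarrow> mu i s \<le> mu i s')
   \<and> (\<forall>i J. finite J \<longrightarrow>
        (\<forall>s. linf s \<and> (\<forall>j. j \<notin> J \<longrightarrow> s j = 0) \<longrightarrow> mu i s \<noteq> \<infinity>)
      \<and> (\<forall>s. linf s \<and> (\<forall>j. j \<notin> J \<longrightarrow> s j = 0) \<longrightarrow>
           (\<forall>\<epsilon>>0. \<exists>\<delta>>0. \<forall>s'. linf s' \<and> (\<forall>j. j \<notin> J \<longrightarrow> s' j = 0)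
               \<and> nrm (\<lambda>j. s' j - s j) < \<delta> \<longrightarrow>
               \<bar>real_of_ereal (mu i s') - real_of_ereal (mu i s)\<bar> < \<epsilon>)))
   \<and> (\<forall>A \<epsilon>. (\<forall>s\<in>A. linf s) \<and> (\<exists>R. \<forall>s\<in>A. nrm s \<le> R) \<and> \<epsilon> > 0 \<longrightarrow>
        (\<exists>\<delta>>0. \<forall>s0\<in>A. \<forall>s. linf s \<and> nrm (\<lambda>j. s j - s0 j) \<le> \<delta> \<longrightarrow>
           (\<forall>i. \<bar>real_of_ereal (mu i (restr s (Isub i)))
                 - real_of_ereal (mu i (restr s0 (Isub i)))\<bar> \<le> \<epsilon>)))"

text \<open>Gamma_i(s) = mu_i([gamma_ij(s_j)]_{j in I_i}); finite by (M3).\<close>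
definition Gamma ::
  "('i \<Rightarrow> 'i set) \<Rightarrow> ('i \<Rightarrow> 'i \<Rightarrow> real \<Rightarrow> real) \<Rightarrow> ('i \<Rightarrow> ('i \<Rightarrow> real) \<Rightarrow> ereal)
     \<Rightarrow> ('i \<Rightarrow> real) \<Rightarrow> ('i \<Rightarrow> real)" where
  "Gamma Isub gam mu s = (\<lambda>i. real_of_ereal
      (mu i (\<lambda>j. if j \<in> Isub i then gam i j (s j) else 0)))"

definition Gamma_rho ::
  "(real \<Rightarrow> real) \<Rightarrow> ('i \<Rightarrow> 'i set) \<Rightarrow> ('i \<Rightarrow> 'i \<Rightarrow> real \<Rightarrow> real)
     \<Rightarrow> ('i \<Rightarrow> ('i \<Rightarrow> real) \<Rightarrow> ereal) \<Rightarrow> ('i \<Rightarrow> real) \<Rightarrow> ('i \<Rightarrow> real)" where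
  "Gamma_rho \<rho> Isub gam mu s = (\<lambda>i. Gamma Isub gam mu s i + \<rho> (Gamma Isub gam mu s i))"

definition UGAS :: "(('i \<Rightarrow> real) \<Rightarrow> ('i \<Rightarrow> real)) \<Rightarrow> bool" where
  "UGAS T \<longleftrightarrow> (\<exists>\<beta>. classKL \<beta> \<and>
      (\<forall>s n. linf s \<longrightarrow> nrm ((T ^^ n) s) \<le> \<beta> (nrm s) (real n)))"

definition MBI :: "(('i \<Rightarrow> real) \<Rightarrow> ('i \<Rightarrow> real)) \<Rightarrow> bool" where
  "MBI T \<longleftrightarrow> (\<exists>\<phi>. classKinf \<phi> \<and>
      (\<forall>s b. linf s \<and> linf b \<and> (\<forall>i. s i \<le> max (b i) (T s i)) \<longrightarrow> nrm s \<le> \<phi> (nrm b)))"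

end

theory Submission imports Defs begin

definition bnd :: "('i \<Rightarrow> real) \<Rightarrow> bool" where
  "bnd f \<longleftrightarrow> bdd_above (range (\<lambda>i. \<bar>f i\<bar>))"

lemma bndI: "(\<And>i. \<bar>f i\<bar> \<le> M) \<Longrightarrow> bnd f"
  unfolding bnd_def by (intro bdd_aboveI2) auto

lemma nrm_ge: "bnd f \<Longrightarrow> \<bar>f i\<bar> \<le> nrm f"
  unfolding bnd_def nrm_def by (rule cSUP_upper) auto

lemma nrm_le: "(\<And>i. \<bar>f i\<bar> \<le> M) \<Longrightarrow> nrm f \<le> M"
  unfolding nrm_def by (rule cSUP_least) auto

lemma nrm_nonneg: "bnd f \<Longrightarrow> 0 \<le> nrm f"
  using nrm_ge[of f undefined] by linarith

lemma linf_bnd: "linf s \<Longrightarrow> bnd s"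
  unfolding linf_def bnd_def by auto

lemma bnd_diff: "bnd f \<Longrightarrow> bnd g \<Longrightarrow> bnd (\<lambda>i. f i - g i)"
proof -
  assume a: "bnd f" "bnd g"
  show ?thesis
  proof (rule bndI[where M="nrm f + nrm g"])
    fix i show "\<bar>f i - g i\<bar> \<le> nrm f + nrm g"
      using nrm_ge[OF a(1), of i] nrm_ge[OF a(2), of i] by linarith
  qed
qed

lemma nrm_tri: "bnd a \<Longrightarrow> bnd b \<Longrightarrow> bnd c \<Longrightarrow>
  nrm (\<lambda>i. a i - c i) \<le> nrm (\<lambda>i. a i - b i) + nrm (\<lambda>i. b i - c i)"
proof -
  assume h: "bnd a" "bnd b" "bnd c"
  have h1: "bnd (\<lambda>i. a i - b i)" and h2: "bnd (\<lambda>i. b i - c i)" using h bnd_diff by auto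
  show ?thesis
  proof (rule nrm_le)
    fix i show "\<bar>a i - c i\<bar> \<le> nrm (\<lambda>i. a i - b i) + nrm (\<lambda>i. b i - c i)"
      using nrm_ge[OF h1, of i] nrm_ge[OF h2, of i] by simp
  qed
qed

lemma nrm_sym: "nrm (\<lambda>i. a i - b i) = nrm (\<lambda>i. b i - a i)"
  unfolding nrm_def by (simp add: abs_minus_commute)

lemma classK_nonneg: "classK g \<Longrightarrow> 0 \<le> x \<Longrightarrow> 0 \<le> g x"
  unfolding classK_def strict_mono_on_def
  by (metis atLeast_iff less_eq_real_def order_refl)

lemma classK_mono: "classK g \<Longrightarrow> 0 \<le> x \<Longrightarrow> x \<le> y \<Longrightarrow> g x \<le> g y"
  unfolding classK_def strict_mono_on_def
  by (metis atLeast_iff less_eq_real_def order_trans)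

lemma classK_strict: "classK g \<Longrightarrow> 0 \<le> x \<Longrightarrow> x < y \<Longrightarrow> g x < g y"
  unfolding classK_def strict_mono_on_def by auto

lemma classK_pos: "classK g \<Longrightarrow> 0 < x \<Longrightarrow> 0 < g x"
  using classK_strict[of g 0 x] unfolding classK_def by auto

lemma classK_cont: "classK g \<Longrightarrow> continuous_on {0..} g"
  unfolding classK_def by auto

lemma classK_zero: "classK g \<Longrightarrow> g 0 = 0"
  unfolding classK_def by auto

lemma classKinf_K: "classKinf g \<Longrightarrow> classK g"
  unfolding classKinf_def by auto

locale S3 =
  fixes Isub :: "'i \<Rightarrow> 'i set"
    and gam :: "'i \<Rightarrow> 'i \<Rightarrow> real \<Rightarrow> real"
    and mu :: "'i \<Rightarrow> ('i \<Rightarrow> real) \<Rightarrow> ereal"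
    and \<sigma> :: "real \<Rightarrow> 'i \<Rightarrow> real"
    and \<rho>t \<phi>min \<phi>max :: "real \<Rightarrow> real"
  assumes gain: "gain_operator Isub gam mu"
    and sigma_in: "\<forall>r\<ge>0. linf (\<sigma> r)"
    and sigma_cont: "\<forall>r\<ge>0. \<forall>\<epsilon>>0. \<exists>\<delta>>0. \<forall>r'\<ge>0.
                       \<bar>r' - r\<bar> < \<delta> \<longrightarrow> nrm (\<lambda>i. \<sigma> r' i - \<sigma> r i) < \<epsilon>"
    and rho_t: "classKinf \<rho>t"
    and decay: "\<forall>r\<ge>0. \<forall>i. Gamma_rho \<rho>t Isub gam mu (\<sigma> r) i \<le> \<sigma> r i"
    and phimin: "classKinf \<phi>min" and phimax: "classKinf \<phi>max"
    and bounds: "\<forall>r\<ge>0. \<forall>i. \<phi>min r \<le> \<sigma> r i \<and> \<sigma> r i \<le> \<phi>max r"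
begin

lemmas G = gain[unfolded gain_operator_def]
lemma fin: "finite (Isub i)" using G[THEN conjunct1] by blast
lemma gamK: "j \<in> Isub i \<Longrightarrow> classK (gam i j)"
  using G[THEN conjunct2, THEN conjunct1] classKinf_K by blast
lemma mu_nonneg: "linf s \<Longrightarrow> 0 \<le> mu i s"
  using G[THEN conjunct2, THEN conjunct2, THEN conjunct2, THEN conjunct1] by blast
lemma mu_mono: "linf s \<Longrightarrow> linf s' \<Longrightarrow> (\<forall>j. s j \<le> s' j) \<Longrightarrow> mu i s \<le> mu i s'"
  using G[THEN conjunct2, THEN conjunct2, THEN conjunct2, THEN conjunct2, THEN conjunct2, THEN conjunct1] by blast
lemma mu_fin: "finite J \<Longrightarrow> linf s \<Longrightarrow> (\<forall>j. j \<notin> J \<longrightarrow> s j = 0) \<Longrightarrow> mu i s \<noteq> \<infinity>"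
  using G[THEN conjunct2, THEN conjunct2, THEN conjunct2, THEN conjunct2, THEN conjunct2, THEN conjunct2, THEN conjunct1] by blast

lemma rtK: "classK \<rho>t" using rho_t classKinf_K by auto
lemma pminK: "classK \<phi>min" using phimin classKinf_K by auto
lemma pmaxK: "classK \<phi>max" using phimax classKinf_K by auto

definition arg :: "'i \<Rightarrow> ('i \<Rightarrow> real) \<Rightarrow> 'i \<Rightarrow> real" where
  "arg i s = (\<lambda>j. if j \<in> Isub i then gam i j (s j) else 0)"

lemma arg_linf: assumes "linf s" shows "linf (arg i s)"
proof -
  have nn: "0 \<le> arg i s j" for j
    using assms gamK classK_nonneg unfolding arg_def linf_def by auto
  have "\<bar>arg i s j\<bar> \<le> (\<Sum>k\<in>Isub i. \<bar>gam i k (s k)\<bar>)" for j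
  proof (cases "j \<in> Isub i")
    case True
    then show ?thesis unfolding arg_def
      using member_le_sum[of j "Isub i" "\<lambda>k. \<bar>gam i k (s k)\<bar>"] fin by auto
  next
    case False
    then show ?thesis unfolding arg_def by (simp add: sum_nonneg)
  qed
  then have "bnd (arg i s)" by (rule bndI)
  then show ?thesis using nn unfolding linf_def bnd_def by auto
qed

lemma arg_fin: "linf s \<Longrightarrow> mu i (arg i s) \<noteq> \<infinity>"
  by (rule mu_fin[OF fin arg_linf]) (auto simp: arg_def)

lemma G_eq: "Gamma Isub gam mu s i = real_of_ereal (mu i (arg i s))"
  unfolding Gamma_def arg_def by simp

lemma G_nonneg: "linf s \<Longrightarrow> 0 \<le> Gamma Isub gam mu s i"
  unfolding G_eq by (intro real_of_ereal_pos mu_nonneg arg_linf)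

lemma G_mono: assumes "linf s" "linf s'" "\<forall>j. s j \<le> s' j"
  shows "Gamma Isub gam mu s i \<le> Gamma Isub gam mu s' i"
proof -
  have "\<forall>j. arg i s j \<le> arg i s' j"
    using assms gamK classK_mono unfolding arg_def linf_def by auto
  then have "mu i (arg i s) \<le> mu i (arg i s')"
    using mu_mono arg_linf assms by blast
  then show ?thesis unfolding G_eq
    by (intro real_of_ereal_positive_mono mu_nonneg arg_linf arg_fin assms)
qed

definition rho :: "real \<Rightarrow> real" where "rho x = min (\<rho>t x / 2) x"

definition T :: "('i \<Rightarrow> real) \<Rightarrow> 'i \<Rightarrow> real" where "T = Gamma_rho rho Isub gam mu"

lemma T_eq: "T s i = Gamma Isub gam mu s i + rho (Gamma Isub gam mu s i)"
  unfolding T_def Gamma_rho_def by simp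

lemma idrho_mono: "0 \<le> x \<Longrightarrow> x \<le> y \<Longrightarrow> x + rho x \<le> y + rho y"
  unfolding rho_def using classK_mono[OF rtK, of x y] by auto

lemma T_nonneg: "linf s \<Longrightarrow> 0 \<le> T s i"
proof -
  assume "linf s"
  then have "0 \<le> Gamma Isub gam mu s i" by (rule G_nonneg)
  then show ?thesis unfolding T_eq rho_def using classK_nonneg[OF rtK] by auto
qed

lemma T_mono: "linf s \<Longrightarrow> linf s' \<Longrightarrow> \<forall>j. s j \<le> s' j \<Longrightarrow> T s i \<le> T s' i"
  unfolding T_eq by (intro idrho_mono G_nonneg G_mono)

definition cc :: "real \<Rightarrow> real" where
  "cc r = min (\<phi>min r / 2) (\<rho>t (\<phi>min r / 4) / 2)"

lemma cc_nonneg: "0 \<le> r \<Longrightarrow> 0 \<le> cc r"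
  unfolding cc_def using classK_nonneg[OF pminK, of r] classK_nonneg[OF rtK, of "\<phi>min r / 4"] by auto

lemma cc_pos: "0 < r \<Longrightarrow> 0 < cc r"
  unfolding cc_def using classK_pos[OF pminK, of r] classK_pos[OF rtK, of "\<phi>min r / 4"] by auto

lemma cc_mono: "0 \<le> r \<Longrightarrow> r \<le> r' \<Longrightarrow> cc r \<le> cc r'"
proof -
  assume a: "0 \<le> r" "r \<le> r'"
  have "\<phi>min r \<le> \<phi>min r'" using classK_mono[OF pminK a] .
  moreover have "0 \<le> \<phi>min r" using classK_nonneg[OF pminK a(1)] .
  ultimately have "\<rho>t (\<phi>min r / 4) \<le> \<rho>t (\<phi>min r' / 4)" using classK_mono[OF rtK] by auto
  then show ?thesis unfolding cc_def using \<open>\<phi>min r \<le> \<phi>min r'\<close> by auto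
qed

lemma sig_lin: "0 \<le> r \<Longrightarrow> linf (\<sigma> r)" using sigma_in by auto
lemma sig_lo: "0 \<le> r \<Longrightarrow> \<phi>min r \<le> \<sigma> r i" using bounds by auto
lemma sig_hi: "0 \<le> r \<Longrightarrow> \<sigma> r i \<le> \<phi>max r" using bounds by auto

lemma KEY: assumes r: "0 \<le> r" shows "T (\<sigma> r) i \<le> \<sigma> r i - cc r"
proof -
  define g where "g = Gamma Isub gam mu (\<sigma> r) i"
  have g0: "0 \<le> g" unfolding g_def using G_nonneg sig_lin r by auto
  have dec: "g + \<rho>t g \<le> \<sigma> r i" using decay r unfolding g_def Gamma_rho_def by auto
  have m0: "0 \<le> \<phi>min r" using classK_nonneg[OF pminK r] .
  have lo: "\<phi>min r \<le> \<sigma> r i" using sig_lo r by auto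
  have Tg: "T (\<sigma> r) i = g + rho g" unfolding T_eq g_def ..
  show ?thesis
  proof (cases "g \<le> \<phi>min r / 4")
    case True
    then show ?thesis unfolding Tg rho_def cc_def using g0 lo by auto
  next
    case False
    then have "\<rho>t (\<phi>min r / 4) \<le> \<rho>t g" using classK_mono[OF rtK, of "\<phi>min r / 4" g] m0 by auto
    then show ?thesis unfolding Tg rho_def cc_def using dec by auto
  qed
qed

lemma STEP:
  assumes s: "linf s" and r: "0 \<le> r" and le: "\<forall>i. s i \<le> \<sigma> r i" and r': "0 \<le> r'"
    and st: "\<forall>i. \<sigma> r i - cc r \<le> \<sigma> r' i"
  shows "linf (T s) \<and> (\<forall>i. T s i \<le> \<sigma> r' i)"
proof -
  have 1: "T s i \<le> \<sigma> r' i" for i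
  proof -
    have "T s i \<le> T (\<sigma> r) i" using T_mono[OF s sig_lin[OF r] le] .
    also have "\<dots> \<le> \<sigma> r i - cc r" using KEY[OF r] .
    also have "\<dots> \<le> \<sigma> r' i" using st by auto
    finally show ?thesis .
  qed
  have "bnd (T s)"
    by (rule bndI[where M="\<phi>max r'"]) (use 1 T_nonneg[OF s] sig_hi[OF r'] in \<open>smt (verit)\<close>)
  then show ?thesis using 1 T_nonneg[OF s] unfolding linf_def bnd_def by auto
qed


definition valid :: "real \<Rightarrow> real \<Rightarrow> bool" where
  "valid q h \<longleftrightarrow> 0 \<le> h \<and> h \<le> q \<and> (\<forall>r'. q - h \<le> r' \<and> r' \<le> q \<longrightarrow> (\<forall>i. \<sigma> q i - cc q \<le> \<sigma> r' i))"

definition gap :: "real \<Rightarrow> real" where "gap q = Sup {h. valid q h}"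

lemma H_ne: assumes "0 \<le> q" shows "valid q 0"
proof -
  have "\<sigma> q i - cc q \<le> \<sigma> r' i" if "q - 0 \<le> r'" "r' \<le> q" for r' i
  proof -
    have "r' = q" using that by linarith
    then show ?thesis using cc_nonneg[OF assms] by simp
  qed
  then show ?thesis unfolding valid_def using assms by blast
qed

lemma H_bdd: "bdd_above {h. valid q h}"
  by (rule bdd_aboveI[where M=q]) (auto simp: valid_def)

lemma gap_ge: "valid q h \<Longrightarrow> h \<le> gap q"
  unfolding gap_def by (rule cSup_upper) (auto intro: H_bdd)

lemma gap_nonneg: "0 \<le> q \<Longrightarrow> 0 \<le> gap q"
  using gap_ge H_ne by auto

lemma gap_le: "0 \<le> q \<Longrightarrow> gap q \<le> q"
proof -
  assume q: "0 \<le> q"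
  show ?thesis unfolding gap_def
  proof (rule cSup_least)
    show "{h. valid q h} \<noteq> {}" using H_ne[OF q] by blast
    show "\<And>x. x \<in> {h. valid q h} \<Longrightarrow> x \<le> q" unfolding valid_def by blast
  qed
qed

lemma gap_local:
  assumes r: "0 < r"
  shows "\<exists>\<epsilon>>0. \<exists>\<eta>>0. \<forall>q. \<bar>q - r\<bar> < \<epsilon> \<longrightarrow> \<eta> \<le> gap q"
proof -
  define c0 where "c0 = cc (r/2)"
  have c0: "0 < c0" unfolding c0_def using cc_pos r by auto
  obtain \<delta> where d: "\<delta> > 0" and dd: "\<forall>x\<ge>0. \<bar>x - r\<bar> < \<delta> \<longrightarrow> nrm (\<lambda>i. \<sigma> x i - \<sigma> r i) < c0/2"
  proof -
    have "0 \<le> r" "0 < c0/2" using r c0 by auto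
    then show ?thesis using sigma_cont that by blast
  qed
  define e where "e = min \<delta> (r/2) / 2"
  have e: "0 < e" "e \<le> \<delta>/2" "e \<le> r/4" unfolding e_def using d r by auto
  have "e \<le> gap q" if q: "\<bar>q - r\<bar> < e" for q
  proof (rule gap_ge)
    have qpos: "r/2 \<le> q" "e \<le> q" using q e unfolding abs_less_iff by linarith+
    have "\<sigma> q i - cc q \<le> \<sigma> r' i" if r': "q - e \<le> r'" "r' \<le> q" for r' i
    proof -
      have r'0: "0 \<le> r'" using r' qpos by linarith
      have q0: "0 \<le> q" using qpos r by linarith
      have "\<bar>r' - r\<bar> < \<delta>" "\<bar>q - r\<bar> < \<delta>" using r' q e d unfolding abs_less_iff by linarith+
      then have n1: "nrm (\<lambda>i. \<sigma> q i - \<sigma> r i) < c0/2" and n2: "nrm (\<lambda>i. \<sigma> r' i - \<sigma> r i) < c0/2"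
        using dd r'0 q0 by auto
      have b: "bnd (\<sigma> q)" "bnd (\<sigma> r)" "bnd (\<sigma> r')"
        using sig_lin linf_bnd r'0 q0 less_imp_le[OF r] by auto
      have "nrm (\<lambda>i. \<sigma> q i - \<sigma> r' i) \<le> nrm (\<lambda>i. \<sigma> q i - \<sigma> r i) + nrm (\<lambda>i. \<sigma> r i - \<sigma> r' i)"
        using nrm_tri[OF b(1,2,3)] .
      also have "\<dots> < c0" using n1 n2 nrm_sym[of "\<sigma> r" "\<sigma> r'"] by auto
      also have "\<dots> \<le> cc q" unfolding c0_def using cc_mono qpos r by auto
      finally have "nrm (\<lambda>i. \<sigma> q i - \<sigma> r' i) < cc q" .
      moreover have "\<sigma> q i - \<sigma> r' i \<le> nrm (\<lambda>i. \<sigma> q i - \<sigma> r' i)"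
        using nrm_ge[OF bnd_diff[OF b(1,3)], of i] by auto
      ultimately show ?thesis by auto
    qed
    then show "valid q e" unfolding valid_def using e qpos by (simp add: less_imp_le)
  qed
  then show ?thesis using e by blast
qed

definition Fi :: "real \<Rightarrow> real" where "Fi r = (INF q\<in>{0<..}. gap q + \<bar>r - q\<bar>)"

lemma Fi_bdd: "bdd_below ((\<lambda>q. gap q + \<bar>r - q\<bar>) ` {0<..})"
  by (rule bdd_belowI2[where m=0]) (auto intro!: add_nonneg_nonneg gap_nonneg)

lemma Fi_le: "0 < q \<Longrightarrow> Fi r \<le> gap q + \<bar>r - q\<bar>"
  unfolding Fi_def by (rule cINF_lower[OF Fi_bdd]) auto

lemma Fi_ge: "(\<And>q. 0 < q \<Longrightarrow> m \<le> gap q + \<bar>r - q\<bar>) \<Longrightarrow> m \<le> Fi r"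
  unfolding Fi_def by (rule cINF_greatest) auto

lemma Fi_nonneg: "0 \<le> Fi r"
  by (rule Fi_ge) (auto intro!: add_nonneg_nonneg gap_nonneg)

lemma Fi_lip: "Fi r \<le> Fi r' + \<bar>r - r'\<bar>"
proof -
  have "Fi r - \<bar>r - r'\<bar> \<le> Fi r'"
  proof (rule Fi_ge)
    fix q :: real assume q: "0 < q"
    have "Fi r \<le> gap q + \<bar>r - q\<bar>" using Fi_le[OF q] .
    then show "Fi r - \<bar>r - r'\<bar> \<le> gap q + \<bar>r' - q\<bar>" by auto
  qed
  then show ?thesis by auto
qed

lemma Fi_zero: "Fi 0 = 0"
proof -
  have "Fi 0 \<le> 0 + e" if e: "0 < e" for e
  proof -
    have "Fi 0 \<le> gap (e/2) + \<bar>0 - e/2\<bar>" using Fi_le[of "e/2" 0] e by simp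
    also have "\<dots> \<le> e" using gap_le[of "e/2"] e by auto
    finally show ?thesis by simp
  qed
  then have "Fi 0 \<le> 0" by (rule field_le_epsilon)
  then show ?thesis using Fi_nonneg by (simp add: order_antisym)
qed

lemma Fi_pos: assumes r: "0 < r" shows "0 < Fi r"
proof -
  obtain e \<eta> where e: "e > 0" "\<eta> > 0" and h: "\<forall>q. \<bar>q - r\<bar> < e \<longrightarrow> \<eta> \<le> gap q"
    using gap_local[OF r] by blast
  have "min e \<eta> \<le> Fi r"
  proof (rule Fi_ge)
    fix q :: real assume q: "0 < q"
    show "min e \<eta> \<le> gap q + \<bar>r - q\<bar>"
    proof (cases "\<bar>q - r\<bar> < e")
      case True then show ?thesis using h gap_nonneg[of q] q by force
    next
      case False then show ?thesis using gap_nonneg[of q] q by auto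
    qed
  qed
  then show ?thesis using e by auto
qed

lemma Fi_le_gap: "0 < r \<Longrightarrow> Fi r \<le> gap r"
  using Fi_le[of r r] by auto

lemma Fi_le_id: "0 \<le> r \<Longrightarrow> Fi r \<le> r"
proof (cases "r = 0")
  case True then show ?thesis using Fi_zero by simp
next
  case False
  assume "0 \<le> r"
  then have "0 < r" using False by simp
  then show ?thesis using Fi_le_gap[of r] gap_le[of r] by simp
qed

definition lam :: "real \<Rightarrow> real" where "lam r = r - Fi r / 2"

lemma lam_0: "lam 0 = 0" unfolding lam_def Fi_zero by simp

lemma lam_lo: "0 \<le> r \<Longrightarrow> r/2 \<le> lam r" unfolding lam_def using Fi_le_id by auto
lemma lam_hi: "lam r \<le> r" unfolding lam_def using Fi_nonneg by auto
lemma lam_nonneg: "0 \<le> r \<Longrightarrow> 0 \<le> lam r" using lam_lo[of r] by auto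
lemma lam_less: "0 < r \<Longrightarrow> lam r < r" unfolding lam_def using Fi_pos by auto
lemma lam_pos: "0 < r \<Longrightarrow> 0 < lam r" using lam_lo[of r] by auto

lemma lam_strict: "x < y \<Longrightarrow> lam x < lam y"
  unfolding lam_def using Fi_lip[of y x] by auto

lemma lam_cont: "continuous_on UNIV lam"
proof -
  have "1-lipschitz_on UNIV Fi"
  proof (rule lipschitz_onI)
    fix x y :: real
    have "Fi x \<le> Fi y + \<bar>x - y\<bar>" "Fi y \<le> Fi x + \<bar>x - y\<bar>"
      using Fi_lip[of x y] Fi_lip[of y x] by (auto simp: abs_minus_commute)
    then show "dist (Fi x) (Fi y) \<le> 1 * dist x y" unfolding dist_real_def mult_1 abs_le_iff by linarith
  qed simp
  then have "continuous_on UNIV Fi" by (rule lipschitz_on_continuous_on)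
  then show ?thesis unfolding lam_def by (intro continuous_intros) auto
qed

lemma lam_step: assumes r: "0 \<le> r" shows "\<forall>i. \<sigma> r i - cc r \<le> \<sigma> (lam r) i"
proof (cases "r = 0")
  case True then show ?thesis using lam_0 cc_nonneg by auto
next
  case False
  then have r0: "0 < r" using r by auto
  have "Fi r / 2 < gap r" using Fi_pos[OF r0] Fi_le_gap[OF r0] by auto
  moreover have ne: "{h. valid r h} \<noteq> {}" using H_ne[OF r] by blast
  ultimately have "\<exists>x\<in>{h. valid r h}. Fi r / 2 < x"
    using less_cSup_iff[OF ne H_bdd, of "Fi r/2"] unfolding gap_def by simp
  then obtain h where h: "valid r h" "Fi r / 2 < h" by blast
  then show ?thesis unfolding valid_def lam_def using Fi_nonneg[of r] by auto
qed

lemma ITER: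
  assumes s: "linf s" and r: "0 \<le> r" and le: "\<forall>i. s i \<le> \<sigma> r i"
  shows "linf ((T^^n) s) \<and> (\<forall>i. (T^^n) s i \<le> \<sigma> ((lam^^n) r) i) \<and> 0 \<le> (lam^^n) r"
proof (induction n)
  case 0 then show ?case using s r le by simp
next
  case (Suc n)
  then have a: "linf ((T^^n) s)" "\<forall>i. (T^^n) s i \<le> \<sigma> ((lam^^n) r) i" "0 \<le> (lam^^n) r" by auto
  show ?case using STEP[OF a(1) a(3) a(2) lam_nonneg[OF a(3)] lam_step[OF a(3)]] lam_nonneg[OF a(3)]
    by simp
qed



lemma lamk_nonneg: "0 \<le> r \<Longrightarrow> 0 \<le> (lam^^k) r"
  by (induction k) (auto intro: lam_nonneg)

lemma lamk_0: "(lam^^k) 0 = 0"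
  by (induction k) (auto simp: lam_0)

lemma lamk_strict: "x < y \<Longrightarrow> (lam^^k) x < (lam^^k) y"
  by (induction k) (auto intro: lam_strict)

lemma lamk_mono: "x \<le> y \<Longrightarrow> (lam^^k) x \<le> (lam^^k) y"
  using lamk_strict[of x y k] by (cases "x = y") auto

lemma lamk_cont: "continuous_on UNIV (lam^^k)"
proof (induction k)
  case 0 then show ?case by (simp add: continuous_on_id)
next
  case (Suc k)
  have "continuous_on UNIV (lam \<circ> (lam^^k))"
    by (rule continuous_on_compose[OF Suc]) (use lam_cont continuous_on_subset in blast)
  then show ?case by simp
qed

lemma lamk_pos: "0 < r \<Longrightarrow> 0 < (lam^^k) r"
  by (induction k) (auto intro: lam_pos)

lemma lamk_Suc_less: "0 < r \<Longrightarrow> (lam^^Suc k) r < (lam^^k) r"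
  using lam_less[OF lamk_pos] by simp

lemma lamk_dec: "decseq (\<lambda>k. (lam^^k) r)"
  by (rule decseq_SucI) (simp add: lam_hi)

lemma lamk_anti: "j \<le> k \<Longrightarrow> (lam^^k) r \<le> (lam^^j) r"
  using lamk_dec unfolding decseq_def by blast

lemma lamk_lim: assumes r: "0 \<le> r" shows "(\<lambda>k. (lam^^k) r) \<longlonglongrightarrow> 0"
proof -
  obtain L where L: "(\<lambda>k. (lam^^k) r) \<longlonglongrightarrow> L" "\<forall>i. L \<le> (lam^^i) r"
    using decseq_convergent[OF lamk_dec, of 0] lamk_nonneg[OF r] by blast
  have L0: "0 \<le> L"
    by (rule LIMSEQ_le_const[OF L(1)]) (use lamk_nonneg[OF r] in auto)
  have "isCont lam L" using lam_cont by (simp add: continuous_on_eq_continuous_at)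
  then have "(\<lambda>k. lam ((lam^^k) r)) \<longlonglongrightarrow> lam L" using L(1) isCont_tendsto_compose by blast
  moreover have "(\<lambda>k. lam ((lam^^k) r)) \<longlonglongrightarrow> L"
    using LIMSEQ_Suc[OF L(1)] by simp
  ultimately have "lam L = L" using LIMSEQ_unique by blast
  then have "L = 0" using lam_less[of L] L0 by fastforce
  then show ?thesis using L(1) by simp
qed

lemma pmin_cont: "continuous_on {0..} \<phi>min" using classK_cont[OF pminK] .
lemma pmax_cont: "continuous_on {0..} \<phi>max" using classK_cont[OF pmaxK] .

lemma pmin_surj: assumes y: "0 \<le> y" shows "\<exists>r\<ge>0. \<phi>min r = y"
proof -
  obtain R where R: "R \<ge> 0" "y < \<phi>min R" using phimin unfolding classKinf_def by blast
  have "\<exists>x. 0 \<le> x \<and> x \<le> R \<and> \<phi>min x = y"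
    by (rule IVT') (use y R classK_zero[OF pminK] continuous_on_subset[OF pmin_cont] in auto)
  then show ?thesis by auto
qed

lemma pmin_inj: "0 \<le> x \<Longrightarrow> 0 \<le> y \<Longrightarrow> \<phi>min x = \<phi>min y \<Longrightarrow> x = y"
  using classK_strict[OF pminK, of x y] classK_strict[OF pminK, of y x] by (cases x y rule: linorder_cases) auto

definition psi :: "real \<Rightarrow> real" where "psi y = (THE r. 0 \<le> r \<and> \<phi>min r = y)"

lemma psi: assumes "0 \<le> y" shows "0 \<le> psi y \<and> \<phi>min (psi y) = y"
proof -
  have "\<exists>!r. 0 \<le> r \<and> \<phi>min r = y" using pmin_surj[OF assms] pmin_inj by blast
  then show ?thesis unfolding psi_def by (rule theI')
qed

lemma psi_inv: "0 \<le> x \<Longrightarrow> psi (\<phi>min x) = x"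
  using psi[OF classK_nonneg[OF pminK]] pmin_inj classK_nonneg[OF pminK] by metis

lemma psi_0: "psi 0 = 0" using psi_inv[of 0] classK_zero[OF pminK] by simp

lemma psi_strict: assumes "0 \<le> x" "x < y" shows "psi x < psi y"
proof (rule ccontr)
  assume "\<not> psi x < psi y"
  then have "psi y \<le> psi x" by simp
  moreover have "0 \<le> psi y" "\<phi>min (psi y) = y" "\<phi>min (psi x) = x" using psi assms by auto
  ultimately have "y \<le> x" using classK_mono[OF pminK, of "psi y" "psi x"] by auto
  then show False using assms by auto
qed

lemma psi_mono: "0 \<le> x \<Longrightarrow> x \<le> y \<Longrightarrow> psi x \<le> psi y"
  using psi_strict[of x y] by (cases "x = y") auto

lemma pmin_img: assumes n: "0 \<le> n" shows "\<phi>min ` {0..n} = {0..\<phi>min n}"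
proof
  show "\<phi>min ` {0..n} \<subseteq> {0..\<phi>min n}"
    using classK_nonneg[OF pminK] classK_mono[OF pminK] by auto
  show "{0..\<phi>min n} \<subseteq> \<phi>min ` {0..n}"
  proof
    fix y assume y: "y \<in> {0..\<phi>min n}"
    have "\<exists>x. 0 \<le> x \<and> x \<le> n \<and> \<phi>min x = y"
      by (rule IVT') (use y n classK_zero[OF pminK] continuous_on_subset[OF pmin_cont] in auto)
    then show "y \<in> \<phi>min ` {0..n}" by auto
  qed
qed

lemma psi_cont: "continuous_on {0..} psi"
proof (clarsimp simp: continuous_on_eq_continuous_within)
  fix y :: real assume y: "0 \<le> y"
  define n where "n = psi y + 1"
  have n: "0 \<le> n" using psi[OF y] n_def by auto
  have "continuous_on (\<phi>min ` {0..n}) psi"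
  proof (rule continuous_on_inv)
    show "continuous_on {0..n} \<phi>min" by (rule continuous_on_subset[OF pmin_cont]) auto
  qed (use psi_inv in auto)
  then have c: "continuous_on {0..\<phi>min n} psi" using pmin_img[OF n] by simp
  have yl: "y < \<phi>min n"
    using classK_strict[OF pminK, of "psi y" n] psi[OF y] n_def by auto
  then have "continuous (at y within {0..\<phi>min n}) psi"
    using c y by (simp add: continuous_on_eq_continuous_within)
  moreover have "at y within {0..} = at y within {0..\<phi>min n}"
    by (rule at_within_nhd[where S="{..<\<phi>min n}"]) (use yl in auto)
  ultimately show "continuous (at y within {0..}) psi" by simp
qed




definition Lam :: "real \<Rightarrow> real \<Rightarrow> real" where
  "Lam p t = (1 - frac t) * (lam^^nat \<lfloor>t\<rfloor>) p + frac t * (lam^^Suc (nat \<lfloor>t\<rfloor>)) p"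

lemma Lam_nat: "Lam p (real n) = (lam^^n) p"
proof -
  have "frac (real n) = 0" using frac_of_int[of "int n"] by simp
  show ?thesis unfolding Lam_def by (simp add: frac_def del: funpow.simps)
qed

lemma Lam_alt: "Lam p t = (lam^^nat \<lfloor>t\<rfloor>) p - frac t * ((lam^^nat \<lfloor>t\<rfloor>) p - (lam^^Suc (nat \<lfloor>t\<rfloor>)) p)"
  unfolding Lam_def by (simp add: algebra_simps)

lemma Lam_nonneg: "0 \<le> p \<Longrightarrow> 0 \<le> Lam p t"
  unfolding Lam_def using frac_lt_1[of t] frac_ge_0[of t] lamk_nonneg[of p]
  by (intro add_nonneg_nonneg mult_nonneg_nonneg) (auto simp del: funpow.simps)

lemma Lam_le: "Lam p t \<le> (lam^^nat \<lfloor>t\<rfloor>) p"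
proof -
  have "(lam^^Suc (nat \<lfloor>t\<rfloor>)) p \<le> (lam^^nat \<lfloor>t\<rfloor>) p" using lamk_anti[of "nat \<lfloor>t\<rfloor>" "Suc (nat \<lfloor>t\<rfloor>)" p] by simp
  then show ?thesis unfolding Lam_alt using frac_ge_0[of t]
    by (simp add: mult_nonneg_nonneg del: funpow.simps)
qed

lemma Lam_gt: assumes p: "0 < p" shows "(lam^^Suc (nat \<lfloor>t\<rfloor>)) p < Lam p t"
proof -
  define a where "a = (lam^^nat \<lfloor>t\<rfloor>) p"
  define b where "b = (lam^^Suc (nat \<lfloor>t\<rfloor>)) p"
  have ab: "b < a" unfolding a_def b_def using lamk_Suc_less[OF p] .
  have "Lam p t = b + (1 - frac t) * (a - b)" unfolding Lam_def a_def b_def by (simp add: algebra_simps)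
  moreover have "0 < (1 - frac t) * (a - b)" using ab frac_lt_1[of t] by simp
  ultimately show ?thesis unfolding b_def by simp
qed

lemma Lam_strict_p: assumes "0 \<le> p" "p < q" shows "Lam p t < Lam q t"
proof -
  have 1: "(lam^^nat \<lfloor>t\<rfloor>) p < (lam^^nat \<lfloor>t\<rfloor>) q" using lamk_strict assms by blast
  have 2: "(lam^^Suc (nat \<lfloor>t\<rfloor>)) p \<le> (lam^^Suc (nat \<lfloor>t\<rfloor>)) q" using lamk_mono assms by (meson less_imp_le)
  have "(1 - frac t) * (lam^^nat \<lfloor>t\<rfloor>) p < (1 - frac t) * (lam^^nat \<lfloor>t\<rfloor>) q"
    using 1 frac_lt_1[of t] by simp
  moreover have "frac t * (lam^^Suc (nat \<lfloor>t\<rfloor>)) p \<le> frac t * (lam^^Suc (nat \<lfloor>t\<rfloor>)) q"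
    using 2 frac_ge_0[of t] by (intro mult_left_mono) auto
  ultimately show ?thesis unfolding Lam_def by linarith
qed

lemma Lam_dec: assumes p: "0 < p" and t: "0 \<le> t1" "t1 < t2" shows "Lam p t2 < Lam p t1"
proof -
  define j1 where "j1 = nat \<lfloor>t1\<rfloor>"
  define j2 where "j2 = nat \<lfloor>t2\<rfloor>"
  have f1: "0 \<le> \<lfloor>t1\<rfloor>" "0 \<le> \<lfloor>t2\<rfloor>" using t by auto
  have fl: "\<lfloor>t1\<rfloor> \<le> \<lfloor>t2\<rfloor>" using t by (intro floor_mono) auto
  show ?thesis
  proof (cases "j1 = j2")
    case True
    then have "int (nat \<lfloor>t1\<rfloor>) = int (nat \<lfloor>t2\<rfloor>)" unfolding j1_def j2_def by simp
    then have eq: "\<lfloor>t1\<rfloor> = \<lfloor>t2\<rfloor>" using f1 by simp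
    then have "frac t1 < frac t2" unfolding frac_def using t by simp
    moreover have "(lam^^Suc j1) p < (lam^^j1) p" using lamk_Suc_less[OF p] .
    ultimately have "frac t1 * ((lam^^j1) p - (lam^^Suc j1) p) < frac t2 * ((lam^^j1) p - (lam^^Suc j1) p)"
      by (intro mult_strict_right_mono) auto
    then show ?thesis unfolding Lam_alt using True eq unfolding j1_def j2_def by (simp del: funpow.simps)
  next
    case False
    then have "Suc j1 \<le> j2" using fl f1 unfolding j1_def j2_def by auto
    then have "(lam^^j2) p \<le> (lam^^Suc j1) p" by (rule lamk_anti)
    moreover have "Lam p t2 \<le> (lam^^j2) p" unfolding j2_def by (rule Lam_le)
    moreover have "(lam^^Suc j1) p < Lam p t1" unfolding j1_def by (rule Lam_gt[OF p])
    ultimately show ?thesis by linarith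
  qed
qed

lemma Lam_lim: assumes p: "0 \<le> p" shows "(Lam p \<longlongrightarrow> 0) at_top"
proof (rule tendsto_sandwich[where f="\<lambda>_. 0" and h="\<lambda>t::real. (lam^^nat \<lfloor>t\<rfloor>) p"])
  show "\<forall>\<^sub>F n in at_top. 0 \<le> Lam p n" using Lam_nonneg[OF p] by simp
  show "\<forall>\<^sub>F n in at_top. Lam p n \<le> (lam^^nat \<lfloor>n\<rfloor>) p" using Lam_le by simp
  show "((\<lambda>_. 0) \<longlongrightarrow> (0::real)) at_top" by simp
  have "filterlim (\<lambda>t::real. nat \<lfloor>t\<rfloor>) sequentially at_top"
    by (rule filterlim_compose[OF filterlim_nat_sequentially filterlim_floor_sequentially])
  from filterlim_compose[OF lamk_lim[OF p] this]
  show "((\<lambda>t::real. (lam^^nat \<lfloor>t\<rfloor>) p) \<longlongrightarrow> 0) at_top" by simp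
qed

definition tent :: "nat \<Rightarrow> real \<Rightarrow> real" where "tent k t = max 0 (1 - \<bar>t - real k\<bar>)"

lemma Lam_sum: assumes t: "0 \<le> t" "t < real N"
  shows "Lam p t = (\<Sum>k\<le>N. tent k t * (lam^^k) p)"
proof -
  define j where "j = nat \<lfloor>t\<rfloor>"
  have jt: "real j \<le> t" "t < real j + 1" unfolding j_def using t by linarith+
  have jN: "Suc j \<le> N" using jt t by linarith
  have fr: "frac t = t - real j" unfolding frac_def j_def using t by simp
  have z: "tent k t * (lam^^k) p = 0" if "k \<in> {..N} - {j, Suc j}" for k
  proof -
    have "k \<noteq> j" "k \<noteq> Suc j" using that by auto
    then have "real k + 1 \<le> real j \<or> real j + 2 \<le> real k" by linarith
    then have "1 \<le> \<bar>t - real k\<bar>" using jt by linarith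
    then show ?thesis unfolding tent_def by simp
  qed
  have "(\<Sum>k\<le>N. tent k t * (lam^^k) p) = (\<Sum>k\<in>{j, Suc j}. tent k t * (lam^^k) p)"
    by (rule sum.mono_neutral_right) (use jN z in auto)
  also have "\<dots> = tent j t * (lam^^j) p + tent (Suc j) t * (lam^^Suc j) p" by simp
  also have "tent j t = 1 - frac t" unfolding tent_def fr using jt by simp
  also have "tent (Suc j) t = frac t" unfolding tent_def fr using jt by simp
  finally show ?thesis unfolding Lam_def j_def by simp
qed

definition G :: "real \<times> real \<Rightarrow> real" where "G x = Lam (fst x) (max 0 (snd x))"

lemma G_cont: "continuous_on UNIV G"
proof -
  define A where "A N = (UNIV :: real set) \<times> {..<real (Suc N)}" for N
  have "continuous_on (\<Union>N\<in>UNIV. A N) G"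
  proof (rule continuous_on_open_UN)
    fix N show "open (A N)" unfolding A_def by (intro open_Times) auto
    have lc: "continuous_on UNIV (\<lambda>x::real\<times>real. (lam^^k) (fst x))" for k
      by (rule continuous_on_compose2[OF lamk_cont continuous_on_fst]) auto
    have "continuous_on (A N) (\<lambda>x. \<Sum>k\<le>Suc N. tent k (max 0 (snd x)) * (lam^^k) (fst x))"
      unfolding tent_def
      by (intro continuous_intros continuous_on_subset[OF lc]) auto
    moreover have "G x = (\<Sum>k\<le>Suc N. tent k (max 0 (snd x)) * (lam^^k) (fst x))" if "x \<in> A N" for x
      unfolding G_def by (rule Lam_sum) (use that A_def in auto)
    ultimately show "continuous_on (A N) G" using continuous_on_cong by (smt (verit))
  qed
  moreover have "(\<Union>N\<in>UNIV. A N) = UNIV"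
  proof -
    have "x \<in> A (nat \<lceil>snd x\<rceil>)" for x
    proof -
      have "snd x \<le> real (nat \<lceil>snd x\<rceil>)" by (rule real_nat_ceiling_ge)
      then show ?thesis unfolding A_def by (cases x) auto
    qed
    then show ?thesis by blast
  qed
  ultimately show ?thesis by simp
qed




definition beta :: "real \<Rightarrow> real \<Rightarrow> real" where "beta r t = \<phi>max (Lam (psi r) t)"

lemma psi_nonneg: "0 \<le> y \<Longrightarrow> 0 \<le> psi y" using psi by auto
lemma psi_eq: "0 \<le> y \<Longrightarrow> \<phi>min (psi y) = y" using psi by auto

lemma beta_cont: "continuous_on ({0..} \<times> {0..}) (\<lambda>x. beta (fst x) (snd x))"
proof -
  define D where "D = ({0..} \<times> {0..} :: (real \<times> real) set)"
  have h: "continuous_on D (\<lambda>x. (psi (fst x), snd x))"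
    by (intro continuous_on_Pair continuous_on_compose2[OF psi_cont continuous_on_fst] continuous_on_snd)
       (auto simp: D_def)
  have g: "continuous_on D (\<lambda>x. G (psi (fst x), snd x))"
    by (rule continuous_on_compose2[OF G_cont h]) auto
  have "continuous_on D (\<lambda>x. \<phi>max (G (psi (fst x), snd x)))"
  proof (rule continuous_on_compose2[OF pmax_cont g])
    show "(\<lambda>x. G (psi (fst x), snd x)) ` D \<subseteq> {0..}"
      unfolding G_def D_def using Lam_nonneg psi_nonneg by auto
  qed
  moreover have "\<phi>max (G (psi (fst x), snd x)) = beta (fst x) (snd x)" if "x \<in> D" for x
    using that unfolding G_def beta_def D_def by auto
  ultimately show ?thesis using continuous_on_cong unfolding D_def by (smt (verit))
qed

lemma beta_cont_r: assumes t: "0 \<le> t" shows "continuous_on {0..} (\<lambda>r. beta r t)"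
proof -
  have c: "continuous_on {0..} (\<lambda>r::real. (r, t))" by (intro continuous_intros)
  have "(\<lambda>r::real. (r, t)) ` {0..} \<subseteq> {0..} \<times> {0..}" using t by auto
  from continuous_on_compose2[OF beta_cont c this] show ?thesis by simp
qed

lemma beta_cont_t: assumes r: "0 \<le> r" shows "continuous_on {0..} (beta r)"
proof -
  have c: "continuous_on {0..} (\<lambda>t::real. (r, t))" by (intro continuous_intros)
  have "(\<lambda>t::real. (r, t)) ` {0..} \<subseteq> {0..} \<times> {0..}" using r by auto
  from continuous_on_compose2[OF beta_cont c this] show ?thesis by simp
qed

lemma Lam_zero: "Lam 0 t = 0" by (simp add: Lam_def lamk_0 del: funpow.simps)

lemma beta_KL: "classKL beta"
  unfolding classKL_def
proof (intro conjI allI impI)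
  have "(\<lambda>(r, t). beta r t) = (\<lambda>x. beta (fst x) (snd x))" by auto
  then show "continuous_on ({0..} \<times> {0..}) (\<lambda>(r, t). beta r t)" using beta_cont by simp
next
  fix t :: real assume t: "0 \<le> t"
  show "classK (\<lambda>r. beta r t)" unfolding classK_def
  proof (intro conjI)
    show "continuous_on {0..} (\<lambda>r. beta r t)" using beta_cont_r[OF t] .
    show "strict_mono_on {0..} (\<lambda>r. beta r t)"
    proof (rule strict_mono_onI)
      fix x y :: real assume xy: "x \<in> {0..}" "y \<in> {0..}" "x < y"
      have "psi x < psi y" using psi_strict xy by auto
      then have "Lam (psi x) t < Lam (psi y) t" using Lam_strict_p psi_nonneg xy by auto
      then show "beta x t < beta y t" unfolding beta_def
        using classK_strict[OF pmaxK] Lam_nonneg psi_nonneg xy by auto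
    qed
    show "beta 0 t = 0" unfolding beta_def psi_0 Lam_zero using classK_zero[OF pmaxK] .
  qed
next
  fix r :: real assume r: "0 < r"
  have p: "0 < psi r" using psi_strict[of 0 r] psi_0 r by auto
  show "continuous_on {0..} (beta r)" using beta_cont_t r by auto
  show "beta r t2 < beta r t1" if t: "0 \<le> t1" "t1 < t2" for t1 t2
  proof -
    have "Lam (psi r) t2 < Lam (psi r) t1" using Lam_dec[OF p t] .
    then show "beta r t2 < beta r t1" unfolding beta_def
      using classK_strict[OF pmaxK] Lam_nonneg p by auto
  qed
  have "((\<lambda>t. \<phi>max (Lam (psi r) t)) \<longlongrightarrow> \<phi>max 0) at_top"
    by (rule continuous_on_tendsto_compose[OF pmax_cont Lam_lim]) (use p Lam_nonneg in auto)
  then show "(beta r \<longlongrightarrow> 0) at_top" unfolding beta_def using classK_zero[OF pmaxK] by simp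
qed

lemma START: assumes s: "linf s" shows "0 \<le> psi (nrm s) \<and> (\<forall>i. s i \<le> \<sigma> (psi (nrm s)) i)"
proof -
  have m: "0 \<le> nrm s" using nrm_nonneg[OF linf_bnd[OF s]] .
  have "s i \<le> \<sigma> (psi (nrm s)) i" for i
  proof -
    have "s i \<le> nrm s" using nrm_ge[OF linf_bnd[OF s], of i] by auto
    also have "\<dots> = \<phi>min (psi (nrm s))" using psi_eq[OF m] by simp
    also have "\<dots> \<le> \<sigma> (psi (nrm s)) i" using sig_lo psi_nonneg[OF m] by auto
    finally show ?thesis .
  qed
  then show ?thesis using psi_nonneg[OF m] by auto
qed

lemma NRMB: assumes x: "linf x" and q: "0 \<le> q" and le: "\<forall>i. x i \<le> \<sigma> q i" shows "nrm x \<le> \<phi>max q"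
proof (rule nrm_le)
  fix i
  have "0 \<le> x i" using x unfolding linf_def by auto
  then show "\<bar>x i\<bar> \<le> \<phi>max q" using le[rule_format, of i] sig_hi[OF q, of i] by auto
qed

lemma UGAS_T: "UGAS T"
  unfolding UGAS_def
proof (intro exI conjI allI impI)
  show "classKL beta" by (rule beta_KL)
  fix s :: "'i \<Rightarrow> real" and n :: nat assume s: "linf s"
  note st = START[OF s]
  have it: "linf ((T^^n) s) \<and> (\<forall>i. (T^^n) s i \<le> \<sigma> ((lam^^n) (psi (nrm s))) i) \<and> 0 \<le> (lam^^n) (psi (nrm s))"
    using ITER[OF s] st by blast
  have "nrm ((T^^n) s) \<le> \<phi>max ((lam^^n) (psi (nrm s)))" using NRMB it by blast
  then show "nrm ((T^^n) s) \<le> beta (nrm s) (real n)" unfolding beta_def Lam_nat .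
qed




definition phi :: "real \<Rightarrow> real" where "phi m = \<phi>max (2 * psi m)"

lemma phi_Kinf: "classKinf phi"
  unfolding classKinf_def classK_def
proof (intro conjI allI)
  have c: "continuous_on {0..} (\<lambda>m. 2 * psi m)" using continuous_on_mult_left[OF psi_cont] by simp
  have "(\<lambda>m. 2 * psi m) ` {0..} \<subseteq> {0..}"
  proof
    fix y assume "y \<in> (\<lambda>m. 2 * psi m) ` {0..}"
    then obtain m where "0 \<le> m" "y = 2 * psi m" by auto
    then show "y \<in> {0..}" using psi_nonneg[of m] by simp
  qed
  from continuous_on_compose2[OF pmax_cont c this]
  show "continuous_on {0..} phi" unfolding phi_def by simp
  show "strict_mono_on {0..} phi"
  proof (rule strict_mono_onI)
    fix x y :: real assume xy: "x \<in> {0..}" "y \<in> {0..}" "x < y"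
    have "psi x < psi y" using psi_strict[of x y] xy by simp
    then have "2 * psi x < 2 * psi y" by simp
    moreover have "0 \<le> 2 * psi x" using psi_nonneg[of x] xy by simp
    ultimately show "phi x < phi y" unfolding phi_def
      using classK_strict[OF pmaxK, of "2 * psi x" "2 * psi y"] by simp
  qed
  show "phi 0 = 0" unfolding phi_def psi_0 using classK_zero[OF pmaxK] by simp
  fix M :: real
  obtain R where R: "0 \<le> R" "M < \<phi>max R" using phimax unfolding classKinf_def by blast
  have R2: "0 \<le> R/2" using R by auto
  have "phi (\<phi>min (R/2)) = \<phi>max R" unfolding phi_def psi_inv[OF R2] by simp
  then have "0 \<le> \<phi>min (R/2) \<and> M < phi (\<phi>min (R/2))" using R classK_nonneg[OF pminK R2] by simp
  then show "\<exists>r\<ge>0. M < phi r" by blast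
qed

lemma MBI_T: "MBI T"
  unfolding MBI_def
proof (intro exI conjI allI impI)
  show "classKinf phi" by (rule phi_Kinf)
  fix s b :: "'i \<Rightarrow> real"
  assume a: "linf s \<and> linf b \<and> (\<forall>i. s i \<le> max (b i) (T s i))"
  then have s: "linf s" and b: "linf b" and H: "\<And>i. s i \<le> max (b i) (T s i)" by auto
  define m where "m = nrm b"
  have m0: "0 \<le> m" unfolding m_def using nrm_nonneg[OF linf_bnd[OF b]] .
  define R0 where "R0 = psi m"
  have R0: "0 \<le> R0" "\<phi>min R0 = m" unfolding R0_def using psi_nonneg[OF m0] psi_eq[OF m0] by auto
  define p where "p = psi (nrm s)"
  have p: "0 \<le> p" "\<forall>i. s i \<le> \<sigma> p i" using START[OF s] unfolding p_def by auto
  have claim: "(\<forall>j<k. R0 \<le> (lam^^Suc j) p) \<longrightarrow> (\<forall>i. s i \<le> \<sigma> ((lam^^k) p) i)" for k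
  proof (induction k)
    case 0 then show ?case using p by simp
  next
    case (Suc k)
    show ?case
    proof (intro impI allI)
      fix i assume pre: "\<forall>j<Suc k. R0 \<le> (lam^^Suc j) p"
      define q where "q = (lam^^k) p"
      have q0: "0 \<le> q" unfolding q_def using lamk_nonneg[OF p(1)] .
      have IH: "\<forall>i. s i \<le> \<sigma> q i" using Suc pre unfolding q_def by auto
      have Tq: "\<forall>i. T s i \<le> \<sigma> (lam q) i"
        using STEP[OF s q0 IH lam_nonneg[OF q0] lam_step[OF q0]] by blast
      have lq: "R0 \<le> lam q" using pre[rule_format, of k] unfolding q_def by simp
      have "b i \<le> m" unfolding m_def using nrm_ge[OF linf_bnd[OF b], of i] by auto
      also have "\<dots> = \<phi>min R0" using R0 by simp
      also have "\<dots> \<le> \<phi>min (lam q)" using classK_mono[OF pminK R0(1) lq] .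
      also have "\<dots> \<le> \<sigma> (lam q) i" using sig_lo lam_nonneg[OF q0] by auto
      finally have "b i \<le> \<sigma> (lam q) i" .
      moreover have "T s i \<le> \<sigma> (lam q) i" using Tq by blast
      ultimately have "max (b i) (T s i) \<le> \<sigma> (lam q) i" by simp
      then have "s i \<le> \<sigma> (lam q) i" using H[of i] by linarith
      then show "s i \<le> \<sigma> ((lam^^Suc k) p) i" unfolding q_def by simp
    qed
  qed
  have pm: "\<phi>max (2 * R0) = phi (nrm b)" unfolding phi_def R0_def m_def ..
  show "nrm s \<le> phi (nrm b)"
  proof (cases "p \<le> 2 * R0")
    case True
    have "nrm s \<le> \<phi>max p" using NRMB[OF s p(1) p(2)] .
    also have "\<dots> \<le> \<phi>max (2 * R0)" using classK_mono[OF pmaxK p(1) True] .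
    finally show ?thesis using pm by simp
  next
    case False
    show ?thesis
    proof (cases "R0 = 0")
      case True
      have all: "nrm s \<le> \<phi>max ((lam^^k) p)" for k
      proof -
        have "\<forall>j<k. R0 \<le> (lam^^Suc j) p" using True lamk_nonneg[OF p(1)] by blast
        then have "\<forall>i. s i \<le> \<sigma> ((lam^^k) p) i" using claim[of k] by blast
        then show ?thesis using NRMB[OF s lamk_nonneg[OF p(1)]] by blast
      qed
      have "(\<lambda>k. \<phi>max ((lam^^k) p)) \<longlonglongrightarrow> \<phi>max 0"
        by (rule continuous_on_tendsto_compose[OF pmax_cont lamk_lim[OF p(1)]])
           (use lamk_nonneg[OF p(1)] in auto)
      then have "nrm s \<le> \<phi>max 0" by (rule LIMSEQ_le_const) (use all in auto)
      then show ?thesis using pm True by simp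
    next
      case R0pos: False
      then have R0p: "0 < R0" using R0 by auto
      have "\<exists>k. (lam^^k) p < R0"
      proof -
        have "\<forall>\<^sub>F k in sequentially. (lam^^k) p < R0"
          using order_tendstoD(2)[OF lamk_lim[OF p(1)] R0p] .
        then obtain N where "\<forall>n\<ge>N. (lam^^n) p < R0" unfolding eventually_sequentially by blast
        then show ?thesis by blast
      qed
      define K where "K = (LEAST k. (lam^^k) p < R0)"
      have K: "(lam^^K) p < R0" unfolding K_def by (rule LeastI_ex) (rule \<open>\<exists>k. (lam^^k) p < R0\<close>)
      have Kmin: "\<not> (lam^^j) p < R0" if "j < K" for j
        using not_less_Least[of j "\<lambda>k. (lam^^k) p < R0"] that unfolding K_def by blast
      have "K \<noteq> 0" using K False R0(1) by (cases "K = 0") auto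
      then obtain k' where k': "K = Suc k'" using not0_implies_Suc by blast
      have pre: "\<forall>j<k'. R0 \<le> (lam^^Suc j) p"
      proof (intro allI impI)
        fix j assume "j < k'"
        then have "Suc j < K" using k' by simp
        then show "R0 \<le> (lam^^Suc j) p" using Kmin[of "Suc j"] by linarith
      qed
      define x where "x = (lam^^k') p"
      have x0: "0 \<le> x" unfolding x_def using lamk_nonneg[OF p(1)] .
      have sx: "\<forall>i. s i \<le> \<sigma> x i" using claim[of k'] pre unfolding x_def by blast
      have "lam x < R0" using K k' unfolding x_def by simp
      then have x2: "x \<le> 2 * R0" using lam_lo[OF x0] by auto
      have "nrm s \<le> \<phi>max x" using NRMB[OF s x0 sx] .
      also have "\<dots> \<le> \<phi>max (2 * R0)" using classK_mono[OF pmaxK x0 x2] .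
      finally show ?thesis using pm by simp
    qed
  qed
qed


lemma rho_Kinf: "classKinf rho"
  unfolding classKinf_def classK_def
proof (intro conjI allI)
  have "continuous_on {0..} (\<lambda>x. min (\<rho>t x / 2) x)"
    by (intro continuous_on_min continuous_on_divide classK_cont[OF rtK] continuous_on_id continuous_on_const) auto
  then show "continuous_on {0..} rho" unfolding rho_def[abs_def] .
  show "strict_mono_on {0..} rho"
  proof (rule strict_mono_onI)
    fix x y :: real assume xy: "x \<in> {0..}" "y \<in> {0..}" "x < y"
    have "\<rho>t x < \<rho>t y" using classK_strict[OF rtK, of x y] xy by simp
    then show "rho x < rho y" unfolding rho_def using xy(3) by linarith
  qed
  show "rho 0 = 0" unfolding rho_def using classK_zero[OF rtK] by simp
  fix M :: real
  obtain R where R: "0 \<le> R" "2 * M < \<rho>t R" using rho_t unfolding classKinf_def by blast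
  define r where "r = max R (\<bar>M\<bar> + 1)"
  have "\<rho>t R \<le> \<rho>t r" unfolding r_def using classK_mono[OF rtK R(1)] by simp
  then have "M < rho r" unfolding rho_def r_def using R by auto
  moreover have "0 \<le> r" unfolding r_def by simp
  ultimately show "\<exists>r\<ge>0. M < rho r" by blast
qed

end

theorem theorem3p7:
  fixes Isub :: "'i::countable \<Rightarrow> 'i set"
    and gam :: "'i \<Rightarrow> 'i \<Rightarrow> real \<Rightarrow> real"
    and mu :: "'i \<Rightarrow> ('i \<Rightarrow> real) \<Rightarrow> ereal"
    and \<sigma> :: "real \<Rightarrow> 'i \<Rightarrow> real"
    and \<rho>t \<phi>min \<phi>max :: "real \<Rightarrow> real"
  assumes gain: "gain_operator Isub gam mu"
    and sigma_in: "\<forall>r\<ge>0. linf (\<sigma> r)"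
    and sigma_cont: "\<forall>r\<ge>0. \<forall>\<epsilon>>0. \<exists>\<delta>>0. \<forall>r'\<ge>0.
                       \<bar>r' - r\<bar> < \<delta> \<longrightarrow> nrm (\<lambda>i. \<sigma> r' i - \<sigma> r i) < \<epsilon>"
    and rho_t: "classKinf \<rho>t"
    and decay: "\<forall>r\<ge>0. \<forall>i. Gamma_rho \<rho>t Isub gam mu (\<sigma> r) i \<le> \<sigma> r i"
    and phimin: "classKinf \<phi>min" and phimax: "classKinf \<phi>max"
    and bounds: "\<forall>r\<ge>0. \<forall>i. \<phi>min r \<le> \<sigma> r i \<and> \<sigma> r i \<le> \<phi>max r"
  shows "\<exists>\<rho>. classKinf \<rho> \<and> UGAS (Gamma_rho \<rho> Isub gam mu)
              \<and> MBI (Gamma_rho \<rho> Isub gam mu)"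
proof -
  interpret S: S3 Isub gam mu \<sigma> \<rho>t \<phi>min \<phi>max
    by (rule S3.intro[OF gain sigma_in sigma_cont rho_t decay phimin phimax bounds])
  show ?thesis using S.rho_Kinf S.UGAS_T S.MBI_T unfolding S.T_def by blast
qed

end
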